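(* Let $G$ be a graph whose adjacency spectrum contains exactly two eigenvalues (counted with multiplicity) different from $2$ and $-1$, namely $r>2$ and $s<-1$. Then: (i) one connected component of $G$ has all its vertices of degree at least $3$, and all other connected components are isomorphic to $K_3$; (ii) if $u,v$ are distinct non-adjacent vertices such that every neighbor of $u$ is also a neighbor of $v$, then $d_v-d_u\geq 5$.
   Context: Graphs are finite and simple; eigenvalues are those of the adjacency matrix; $d_v$ denotes the degree of vertex $v$. *)

theory Defs
  imports "Jordan_Normal_Form.Char_Poly"
begin

text \<open>A finite simple graph on vertex set {0..<n}, given by a symmetric irreflexive
  adjacency relation E (only its values on {0..<n} matter).\<close>

definition simple_graph :: "nat \<Rightarrow> (nat \<Rightarrow> nat \<Rightarrow> bool) \<Rightarrow> bool" where
  "simple_graph n E \<longleftrightarrow> (\<forall>i<n. \<forall>j<n. E i j \<longleftrightarrow> E j i) \<and> (\<forall>i<n. \<not> E i i)"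

definition adj_matrix :: "nat \<Rightarrow> (nat \<Rightarrow> nat \<Rightarrow> bool) \<Rightarrow> real mat" where
  "adj_matrix n E = mat n n (\<lambda>(i,j). if E i j then 1 else 0)"

definition degree :: "nat \<Rightarrow> (nat \<Rightarrow> nat \<Rightarrow> bool) \<Rightarrow> nat \<Rightarrow> nat" where
  "degree n E v = card {w. w < n \<and> E v w}"

definition reach :: "nat \<Rightarrow> (nat \<Rightarrow> nat \<Rightarrow> bool) \<Rightarrow> nat \<Rightarrow> nat \<Rightarrow> bool" where
  "reach n E = (\<lambda>u v. u < n \<and> v < n \<and> E u v)\<^sup>*\<^sup>*"

definition component :: "nat \<Rightarrow> (nat \<Rightarrow> nat \<Rightarrow> bool) \<Rightarrow> nat \<Rightarrow> nat set" where
  "component n E v = {w. w < n \<and> reach n E v w}"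

definition components :: "nat \<Rightarrow> (nat \<Rightarrow> nat \<Rightarrow> bool) \<Rightarrow> nat set set" where
  "components n E = component n E ` {0..<n}"

definition is_K3 :: "(nat \<Rightarrow> nat \<Rightarrow> bool) \<Rightarrow> nat set \<Rightarrow> bool" where
  "is_K3 E C \<longleftrightarrow> card C = 3 \<and> (\<forall>x\<in>C. \<forall>y\<in>C. x \<noteq> y \<longrightarrow> E x y)"

end

theory Submission
  imports Defs "Jordan_Normal_Form.Schur_Decomposition"
begin

definition mvM :: "nat \<Rightarrow> real mat \<Rightarrow> (nat \<Rightarrow> real) \<Rightarrow> nat \<Rightarrow> real" where
  "mvM n M x = (\<lambda>i. \<Sum>j<n. M $$ (i,j) * x j)"

definition LM :: "nat \<Rightarrow> real mat \<Rightarrow> real \<Rightarrow> (nat \<Rightarrow> real) \<Rightarrow> nat \<Rightarrow> real" where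
  "LM n M c x = (\<lambda>i. mvM n M x i - c * x i)"

definition eqn :: "nat \<Rightarrow> (nat \<Rightarrow> real) \<Rightarrow> (nat \<Rightarrow> real) \<Rightarrow> bool" where
  "eqn n x y = (\<forall>i<n. x i = y i)"

definition dot :: "nat \<Rightarrow> (nat \<Rightarrow> real) \<Rightarrow> (nat \<Rightarrow> real) \<Rightarrow> real" where
  "dot n x y = (\<Sum>i<n. x i * y i)"

definition opl :: "nat \<Rightarrow> real mat \<Rightarrow> real list \<Rightarrow> (nat \<Rightarrow> real) \<Rightarrow> nat \<Rightarrow> real" where
  "opl n M ds x = foldr (LM n M) ds x"

lemma mvM_add: "mvM n M (\<lambda>i. x i + y i) = (\<lambda>i. mvM n M x i + mvM n M y i)"
  by (auto simp: mvM_def algebra_simps sum.distrib)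
lemma mvM_diff: "mvM n M (\<lambda>i. x i - y i) = (\<lambda>i. mvM n M x i - mvM n M y i)"
  by (auto simp: mvM_def algebra_simps sum_subtractf)
lemma mvM_scale: "mvM n M (\<lambda>i. c * x i) = (\<lambda>i. c * mvM n M x i)"
  by (auto simp: mvM_def algebra_simps sum_distrib_left)
lemma mvM_cong: "eqn n x y \<Longrightarrow> mvM n M x = mvM n M y"
  by (auto simp: mvM_def eqn_def intro!: sum.cong)
lemma mvM_zero: "eqn n x (\<lambda>_. 0) \<Longrightarrow> mvM n M x = (\<lambda>_. 0)"
  by (auto simp: mvM_def eqn_def intro!: sum.neutral)

lemma eqn_refl[simp]: "eqn n x x" by (simp add: eqn_def)
lemma eqn_sym: "eqn n x y \<Longrightarrow> eqn n y x" by (simp add: eqn_def)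
lemma eqn_trans: "eqn n x y \<Longrightarrow> eqn n y z \<Longrightarrow> eqn n x z" by (simp add: eqn_def)

lemma LM_expand2: "LM n M a (LM n M b x) =
   (\<lambda>i. mvM n M (mvM n M x) i - (a+b) * mvM n M x i + a*b*x i)"
  unfolding LM_def by (auto simp: mvM_diff mvM_scale algebra_simps)

lemma LM_comm: "LM n M a (LM n M b x) = LM n M b (LM n M a x)"
  unfolding LM_expand2 by (simp add: algebra_simps)

lemma LM_expand3: "LM n M a (LM n M b (LM n M c x)) =
   (\<lambda>i. mvM n M (mvM n M (mvM n M x)) i - (a+b+c) * mvM n M (mvM n M x) i
      + (a*b+b*c+c*a) * mvM n M x i - a*b*c*x i)"
  unfolding LM_expand2 unfolding LM_def
  by (auto simp: mvM_diff mvM_scale mvM_add algebra_simps)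

lemma LM_add: "LM n M c (\<lambda>i. x i + y i) = (\<lambda>i. LM n M c x i + LM n M c y i)"
  by (auto simp: LM_def mvM_add algebra_simps)
lemma LM_scale: "LM n M c (\<lambda>i. k * x i) = (\<lambda>i. k * LM n M c x i)"
  by (auto simp: LM_def mvM_scale algebra_simps)
lemma LM_cong: "eqn n x y \<Longrightarrow> eqn n (LM n M c x) (LM n M c y)"
  by (auto simp: LM_def eqn_def mvM_cong[of n x y])
lemma LM_zero: "eqn n x (\<lambda>_. 0) \<Longrightarrow> eqn n (LM n M c x) (\<lambda>_. 0)"
  by (auto simp: LM_def eqn_def mvM_zero)

lemma LM_pow_cong: "eqn n x y \<Longrightarrow> eqn n ((LM n M c ^^ k) x) ((LM n M c ^^ k) y)"
  by (induct k) (auto intro: LM_cong)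
lemma LM_pow_comm: "(LM n M c ^^ k) (LM n M d x) = LM n M d ((LM n M c ^^ k) x)"
  by (induct k) (auto simp: LM_comm)

lemma opl_append: "opl n M (xs @ ys) x = opl n M xs (opl n M ys x)"
  by (simp add: opl_def)
lemma opl_replicate: "opl n M (replicate k d) x = (LM n M d ^^ k) x"
  by (induct k) (auto simp: opl_def)
lemma opl_cong: "eqn n x y \<Longrightarrow> eqn n (opl n M ds x) (opl n M ds y)"
  by (induct ds) (auto simp: opl_def intro: LM_cong)
lemma opl_zero: "eqn n x (\<lambda>_. 0) \<Longrightarrow> eqn n (opl n M ds x) (\<lambda>_. 0)"
  by (induct ds) (auto simp: opl_def intro: LM_zero)

lemma mvM_vec: assumes "M \<in> carrier_mat n n"
  shows "M *\<^sub>v vec n x = vec n (mvM n M x)"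
  using assms by (auto simp: mvM_def scalar_prod_def lessThan_atLeast0 intro!: eq_vecI sum.cong)

lemma mvM_mult: assumes "M1 \<in> carrier_mat n n" "M2 \<in> carrier_mat n n"
  shows "eqn n (mvM n (M1 * M2) x) (mvM n M1 (mvM n M2 x))"
proof -
  have "vec n (mvM n (M1 * M2) x) = (M1 * M2) *\<^sub>v vec n x"
    using assms by (simp add: mvM_vec)
  also have "\<dots> = M1 *\<^sub>v (M2 *\<^sub>v vec n x)"
    using assms by (simp add: assoc_mult_mat_vec)
  also have "\<dots> = vec n (mvM n M1 (mvM n M2 x))"
    using assms by (simp add: mvM_vec)
  finally show ?thesis unfolding eqn_def by (metis index_vec)
qed

lemma mvM_one: "eqn n (mvM n (1\<^sub>m n) x) x"
proof -
  have "vec n (mvM n (1\<^sub>m n) x) = 1\<^sub>m n *\<^sub>v vec n x" by (simp add: mvM_vec)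
  also have "\<dots> = vec n x" by simp
  finally show ?thesis unfolding eqn_def by (metis index_vec)
qed

locale simw =
  fixes n :: nat and A B P Q :: "real mat"
  assumes carr: "A \<in> carrier_mat n n" "B \<in> carrier_mat n n" "P \<in> carrier_mat n n" "Q \<in> carrier_mat n n"
    and QP: "Q * P = 1\<^sub>m n" and PQ: "P * Q = 1\<^sub>m n" and APBQ: "A = P * B * Q"
begin

lemma QP_v: "eqn n (mvM n Q (mvM n P x)) x"
  by (metis QP carr(3,4) eqn_sym eqn_trans mvM_mult mvM_one)
lemma PQ_v: "eqn n (mvM n P (mvM n Q x)) x"
  by (metis PQ carr(3,4) eqn_sym eqn_trans mvM_mult mvM_one)

lemma A_v: "eqn n (mvM n A x) (mvM n P (mvM n B (mvM n Q x)))"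
proof -
  have "eqn n (mvM n A x) (mvM n (P * B) (mvM n Q x))"
    unfolding APBQ using carr by (intro mvM_mult) auto
  moreover have "eqn n (mvM n (P * B) (mvM n Q x)) (mvM n P (mvM n B (mvM n Q x)))"
    using carr by (intro mvM_mult) auto
  ultimately show ?thesis by (rule eqn_trans)
qed

lemma LM_transfer: "eqn n (LM n A c x) (mvM n P (LM n B c (mvM n Q x)))"
proof -
  have "mvM n P (LM n B c (mvM n Q x)) = (\<lambda>i. mvM n P (mvM n B (mvM n Q x)) i - c * mvM n P (mvM n Q x) i)"
    unfolding LM_def by (simp add: mvM_diff mvM_scale)
  then show ?thesis using A_v[of x] PQ_v[of x] by (auto simp: eqn_def LM_def)
qed

lemma opl_transfer: "eqn n (opl n A ds x) (mvM n P (opl n B ds (mvM n Q x)))"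
proof (induct ds)
  case Nil
  then show ?case using PQ_v[of x] by (simp add: opl_def eqn_sym)
next
  case (Cons d ds)
  let ?y = "opl n B ds (mvM n Q x)"
  have "eqn n (opl n A (d # ds) x) (LM n A d (mvM n P ?y))"
    using Cons by (simp add: opl_def LM_cong)
  moreover have "eqn n (LM n A d (mvM n P ?y)) (mvM n P (LM n B d (mvM n Q (mvM n P ?y))))"
    by (rule LM_transfer)
  moreover have "mvM n P (LM n B d (mvM n Q (mvM n P ?y))) = mvM n P (LM n B d ?y)"
    by (intro mvM_cong LM_cong QP_v)
  ultimately show ?case by (simp add: opl_def eqn_trans)
qed

end

lemma tri_sum: assumes B: "B \<in> carrier_mat n n" and ut: "upper_triangular B"
  and i: "i < n" and z: "\<And>j. i < j \<Longrightarrow> j < n \<Longrightarrow> x j = 0"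
  shows "mvM n B x i = B $$ (i,i) * x i"
proof -
  have "mvM n B x i = (\<Sum>j<n. if j = i then B $$ (i,i) * x i else 0)"
    unfolding mvM_def
  proof (intro sum.cong refl)
    fix j assume j: "j \<in> {..<n}"
    show "B $$ (i, j) * x j = (if j = i then B $$ (i,i) * x i else 0)"
    proof (cases "j < i")
      case True then show ?thesis using ut i B by (auto dest: upper_triangularD)
    next
      case False then show ?thesis using z[of j] j by auto
    qed
  qed
  also have "\<dots> = B $$ (i,i) * x i" using i by simp
  finally show ?thesis .
qed

lemma tri_CH: assumes B: "B \<in> carrier_mat n n" and ut: "upper_triangular B"
  shows "k \<le> n \<Longrightarrow> (\<And>i. k \<le> i \<Longrightarrow> i < n \<Longrightarrow> x i = 0) \<Longrightarrow>
     eqn n (opl n B (take k (diag_mat B)) x) (\<lambda>_. 0)"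
proof (induct k arbitrary: x)
  case 0
  then show ?case by (auto simp: opl_def eqn_def)
next
  case (Suc k)
  have len: "length (diag_mat B) = n" using B by (simp add: diag_mat_def)
  have tk: "take (Suc k) (diag_mat B) = take k (diag_mat B) @ [B $$ (k,k)]"
    using Suc(2) len by (simp add: take_Suc_conv_app_nth diag_mat_def)
  let ?y = "LM n B (B $$ (k,k)) x"
  have y0: "?y i = 0" if "k \<le> i" "i < n" for i
  proof -
    have "mvM n B x i = B $$ (i,i) * x i"
      by (rule tri_sum[OF B ut \<open>i < n\<close>]) (use Suc(3) that in auto)
    then show ?thesis using Suc(3)[of i] that by (cases "i = k") (auto simp: LM_def)
  qed
  have "eqn n (opl n B (take k (diag_mat B)) ?y) (\<lambda>_. 0)"
    by (rule Suc(1)) (use Suc(2) y0 in auto)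
  then show ?case unfolding tk opl_append by (simp add: opl_def)
qed

lemma tri_eig_unique: assumes B: "B \<in> carrier_mat n n" and ut: "upper_triangular B"
  and d: "\<And>k. 0 < k \<Longrightarrow> k < n \<Longrightarrow> B $$ (k,k) \<noteq> r"
  and ev: "eqn n (mvM n B z) (\<lambda>i. r * z i)" and z0: "z 0 = 0"
  shows "eqn n z (\<lambda>_. 0)"
proof -
  have "\<forall>i. i < n \<longrightarrow> n \<le> i + m \<longrightarrow> z i = 0" for m
  proof (induct m)
    case 0 then show ?case by auto
  next
    case (Suc m)
    show ?case
    proof (intro allI impI)
      fix i assume i: "i < n" "n \<le> i + Suc m"
      show "z i = 0"
      proof (cases "n \<le> i + m")
        case True then show ?thesis using Suc i by auto
      next
        case False
        have zj: "z j = 0" if "i < j" "j < n" for j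
        proof -
          have "n \<le> j + m" using that i by linarith
          then show ?thesis using Suc that by blast
        qed
        have "mvM n B z i = B $$ (i,i) * z i"
          by (rule tri_sum[OF B ut \<open>i < n\<close>]) (use zj in auto)
        then have "(B $$ (i,i) - r) * z i = 0" using ev i by (auto simp: eqn_def algebra_simps)
        then show ?thesis using d[of i] z0 i by (cases "i = 0") auto
      qed
    qed
  qed
  then show ?thesis unfolding eqn_def by (metis le_add2)
qed

lemma tri_eig0: assumes B: "B \<in> carrier_mat n n" and ut: "upper_triangular B"
  shows "eqn n (mvM n B (\<lambda>i. if i = 0 then 1 else 0)) (\<lambda>i. B $$ (0,0) * (if i = 0 then 1 else 0))"
  unfolding eqn_def mvM_def
proof (intro allI impI)
  fix i assume i: "i < n"
  have "(\<Sum>j<n. B $$ (i, j) * (if j = 0 then 1 else 0)) = B $$ (i, 0)"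
    using i by (simp add: if_distrib cong: if_cong)
  then show "(\<Sum>j<n. B $$ (i, j) * (if j = 0 then 1 else 0)) = B $$ (0, 0) * (if i = 0 then 1 else 0)"
    using ut i B by (auto dest: upper_triangularD)
qed

definition eig :: "nat \<Rightarrow> real mat \<Rightarrow> (nat \<Rightarrow> real) \<Rightarrow> real \<Rightarrow> bool" where
  "eig n M y l = eqn n (LM n M l y) (\<lambda>_. 0)"

definition proj :: "nat \<Rightarrow> real mat \<Rightarrow> real \<Rightarrow> real \<Rightarrow> real \<Rightarrow> real \<Rightarrow> (nat \<Rightarrow> real) \<Rightarrow> nat \<Rightarrow> real" where
  "proj n M l a b c x = (\<lambda>i. (1 / ((l-a)*(l-b)*(l-c))) * LM n M a (LM n M b (LM n M c x)) i)"

lemma dot_add_left: "dot n (\<lambda>i. x i + y i) z = dot n x z + dot n y z"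
  by (simp add: dot_def algebra_simps sum.distrib)
lemma dot_add_right: "dot n z (\<lambda>i. x i + y i) = dot n z x + dot n z y"
  by (simp add: dot_def algebra_simps sum.distrib)
lemma dot_scale_right: "dot n z (\<lambda>i. c * x i) = c * dot n z x"
  by (simp add: dot_def algebra_simps sum_distrib_left)
lemma dot_scale_left: "dot n (\<lambda>i. c * x i) z = c * dot n x z"
  by (simp add: dot_def algebra_simps sum_distrib_left)
lemma dot_diff_left: "dot n (\<lambda>i. x i - y i) z = dot n x z - dot n y z"
  by (simp add: dot_def algebra_simps sum_subtractf)
lemma dot_diff_right: "dot n z (\<lambda>i. x i - y i) = dot n z x - dot n z y"
  by (simp add: dot_def algebra_simps sum_subtractf)
lemma dot_cong: "eqn n x x' \<Longrightarrow> eqn n y y' \<Longrightarrow> dot n x y = dot n x' y'"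
  by (simp add: dot_def eqn_def)
lemma dot_comm: "dot n x y = dot n y x"
  by (simp add: dot_def mult.commute)
lemma dot_self_nonneg: "dot n x x \<ge> 0"
  by (simp add: dot_def sum_nonneg)
lemma dot_self_zero: "dot n x x = 0 \<Longrightarrow> eqn n x (\<lambda>_. 0)"
  unfolding dot_def eqn_def by (subst (asm) sum_nonneg_eq_0_iff) auto

lemma eig_LM: "eig n M y l \<Longrightarrow> eqn n (LM n M c y) (\<lambda>i. (l - c) * y i)"
  by (auto simp: eig_def eqn_def LM_def algebra_simps)

lemma eig_mvM: "eig n M y l \<Longrightarrow> eqn n (mvM n M y) (\<lambda>i. l * y i)"
  by (auto simp: eig_def eqn_def LM_def algebra_simps)

lemma lagrange_id:
  fixes X m1 m2 m3 r s :: real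
  assumes "r \<noteq> s" "r \<noteq> 2" "r \<noteq> -1" "s \<noteq> 2" "s \<noteq> -1"
  shows "X = 1 / ((r-s)*(r-2)*(r-(-1))) * (m3 - (s+2+(-1))*m2 + (s*2+2*(-1)+(-1)*s)*m1 - s*2*(-1)*X)
           + 1 / ((s-r)*(s-2)*(s-(-1))) * (m3 - (r+2+(-1))*m2 + (r*2+2*(-1)+(-1)*r)*m1 - r*2*(-1)*X)
           + 1 / ((2-r)*(2-s)*(2-(-1))) * (m3 - (r+s+(-1))*m2 + (r*s+s*(-1)+(-1)*r)*m1 - r*s*(-1)*X)
           + 1 / ((-1-r)*(-1-s)*(-1-2)) * (m3 - (r+s+2)*m2 + (r*s+s*2+2*r)*m1 - r*s*2*X)"
proof -
  have a: "r - s \<noteq> 0" "r - 2 \<noteq> 0" "r + 1 \<noteq> 0" "s - 2 \<noteq> 0" "s + 1 \<noteq> 0" 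
     using assms by auto
  have nz: "r \<noteq> s" "s \<noteq> r" "r \<noteq> 2" "2 \<noteq> r" "s \<noteq> 2" "2 \<noteq> s" "r \<noteq> -1" "-1 \<noteq> r" "s \<noteq> -1" "-1 \<noteq> s" "1 + r \<noteq> 0" "1 + s \<noteq> 0" using assms by auto
  define D where "D = (r-s)*(r-2)*(r+1)*(s-2)*(s+1)"
  have D: "D \<noteq> 0" using a by (simp add: D_def)
  have c1: "1 / ((r-s)*(r-2)*(r-(-1))) = (s-2)*(s+1) / D" unfolding D_def 
    by (simp add: divide_simps a assms nz)
  have c2: "1 / ((s-r)*(s-2)*(s-(-1))) = -(r-2)*(r+1) / D" unfolding D_def 
    apply (simp add: divide_simps a assms nz) by (simp add: algebra_simps)
  have c3: "1 / ((2-r)*(2-s)*(2-(-1))) = (r-s)*(r+1)*(s+1)/3 / D" unfolding D_def 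
    apply (simp add: divide_simps a assms nz) by (simp add: algebra_simps)
  have c4: "1 / ((-1-r)*(-1-s)*(-1-2)) = -(r-s)*(r-2)*(s-2)/3 / D" unfolding D_def 
    apply (simp add: divide_simps a assms nz) by (simp add: algebra_simps)
  show ?thesis unfolding c1 c2 c3 c4
    apply (simp add: divide_simps D assms a)
    unfolding D_def by (simp add: algebra_simps)
qed

locale symm =
  fixes n :: nat and M :: "real mat"
  assumes sym: "\<And>i j. i < n \<Longrightarrow> j < n \<Longrightarrow> M $$ (i,j) = M $$ (j,i)"
begin

lemma dot_mvM: "dot n (mvM n M x) y = dot n x (mvM n M y)"
proof -
  have "dot n (mvM n M x) y = (\<Sum>i<n. \<Sum>j<n. M $$ (i,j) * x j * y i)"
    by (simp add: dot_def mvM_def sum_distrib_right)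
  also have "\<dots> = (\<Sum>j<n. \<Sum>i<n. M $$ (i,j) * x j * y i)" by (rule sum.swap)
  also have "\<dots> = (\<Sum>j<n. \<Sum>i<n. x j * (M $$ (j,i) * y i))"
    by (intro sum.cong refl) (simp add: sym)
  also have "\<dots> = dot n x (mvM n M y)"
    by (simp add: dot_def mvM_def sum_distrib_left)
  finally show ?thesis .
qed

lemma dot_LM: "dot n (LM n M c x) y = dot n x (LM n M c y)"
  unfolding LM_def by (simp add: dot_diff_left dot_diff_right dot_scale_left dot_scale_right dot_mvM)

lemma orth: assumes "eig n M y l" "eig n M z k" "l \<noteq> k" shows "dot n y z = 0"
proof -
  have "l * dot n y z = dot n (mvM n M y) z"
    using dot_cong[OF eig_mvM[OF assms(1)] eqn_refl[of n z]] by (simp add: dot_scale_left)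
  also have "\<dots> = dot n y (mvM n M z)" by (rule dot_mvM)
  also have "\<dots> = k * dot n y z"
    using dot_cong[OF eqn_refl[of n y] eig_mvM[OF assms(2)]] by (simp add: dot_scale_right)
  finally show ?thesis using assms(3) by auto
qed

lemma pow_reduce: "eqn n ((LM n M c ^^ k) y) (\<lambda>_. 0) \<Longrightarrow> eqn n (LM n M c y) (\<lambda>_. 0)"
proof (induct k arbitrary: y)
  case 0
  then show ?case by (simp add: LM_zero)
next
  case (Suc k)
  have "(LM n M c ^^ Suc k) y = (LM n M c ^^ k) (LM n M c y)"
    by (simp add: funpow_Suc_right del: funpow.simps)
  with Suc have h: "eqn n (LM n M c (LM n M c y)) (\<lambda>_. 0)" by auto
  have "dot n (LM n M c y) (LM n M c y) = dot n y (LM n M c (LM n M c y))" by (rule dot_LM)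
  also have "\<dots> = dot n y (\<lambda>_. 0)" by (rule dot_cong[OF eqn_refl h])
  also have "\<dots> = 0" by (simp add: dot_def)
  finally show ?case by (rule dot_self_zero)
qed

lemma four:
  assumes e: "eig n M y1 l1" "eig n M y2 l2" "eig n M y3 l3" "eig n M y4 l4"
  and d: "l1 \<noteq> l2" "l1 \<noteq> l3" "l1 \<noteq> l4" "l2 \<noteq> l3" "l2 \<noteq> l4" "l3 \<noteq> l4"
  and z: "eqn n z (\<lambda>i. c1 * y1 i + c2 * y2 i + c3 * y3 i + c4 * y4 i)"
  shows "dot n (\<lambda>i. y1 i + y2 i + y3 i + y4 i) z =
    c1 * dot n y1 y1 + c2 * dot n y2 y2 + c3 * dot n y3 y3 + c4 * dot n y4 y4"
proof -
  have o: "dot n y1 y2 = 0" "dot n y1 y3 = 0" "dot n y1 y4 = 0" "dot n y2 y3 = 0" "dot n y2 y4 = 0"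
    "dot n y3 y4 = 0" "dot n y2 y1 = 0" "dot n y3 y1 = 0" "dot n y4 y1 = 0" "dot n y3 y2 = 0" "dot n y4 y2 = 0"
    "dot n y4 y3 = 0"
    using orth e d by (metis)+
  have "dot n (\<lambda>i. y1 i + y2 i + y3 i + y4 i) z = dot n (\<lambda>i. y1 i + y2 i + y3 i + y4 i) (\<lambda>i. c1 * y1 i + c2 * y2 i + c3 * y3 i + c4 * y4 i)"
    by (rule dot_cong[OF eqn_refl z])
  also have "\<dots> = c1 * dot n y1 y1 + c2 * dot n y2 y2 + c3 * dot n y3 y3 + c4 * dot n y4 y4"
    apply (subst dot_add_left[where x="\<lambda>i. y1 i + y2 i + y3 i"])
    apply (subst dot_add_left[where x="\<lambda>i. y1 i + y2 i"])
    apply (subst dot_add_left)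
    apply (simp only: dot_add_right[where x="\<lambda>i. c1 * y1 i + c2 * y2 i + c3 * y3 i"]
       dot_add_right[where x="\<lambda>i. c1 * y1 i + c2 * y2 i"] dot_add_right dot_scale_right o)
    done
  finally show ?thesis .
qed

end

locale spec = symm +
  fixes r s :: real
  assumes r2: "r > 2" and sm: "s < -1"
  and Z: "\<And>x. eqn n (LM n M (-1) (LM n M 2 (LM n M r (LM n M s x)))) (\<lambda>_. 0)"
begin

abbreviation "xr x \<equiv> proj n M r s 2 (-1) x"
abbreviation "xs x \<equiv> proj n M s r 2 (-1) x"
abbreviation "x2 x \<equiv> proj n M 2 r s (-1) x"
abbreviation "xm x \<equiv> proj n M (-1) r s 2 x"

lemma dec: "x = (\<lambda>i. xr x i + xs x i + x2 x i + xm x i)"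
proof
  fix i
  show "x i = xr x i + xs x i + x2 x i + xm x i"
    unfolding proj_def LM_expand3
    by (rule lagrange_id) (use r2 sm in auto)
qed


lemma eig_proj: assumes "eqn n (LM n M l (LM n M a (LM n M b (LM n M c x)))) (\<lambda>_. 0)"
  shows "eig n M (proj n M l a b c x) l"
proof -
  have "LM n M l (proj n M l a b c x) = (\<lambda>i. (1 / ((l-a)*(l-b)*(l-c))) * LM n M l (LM n M a (LM n M b (LM n M c x))) i)"
    unfolding proj_def by (rule LM_scale)
  then show ?thesis unfolding eig_def using assms by (simp add: eqn_def)
qed

lemma eig_r: "eig n M (xr x) r"
  by (rule eig_proj) (metis Z LM_comm)
lemma eig_s: "eig n M (xs x) s"
  by (rule eig_proj) (metis Z LM_comm)
lemma eig_2: "eig n M (x2 x) 2"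
  by (rule eig_proj) (metis Z LM_comm)
lemma eig_m: "eig n M (xm x) (-1)"
  by (rule eig_proj) (metis Z LM_comm)

lemma dx: "eqn n x (\<lambda>i. xr x i + xs x i + x2 x i + xm x i)"
  using fun_cong[OF dec[of x]] by (simp add: eqn_def)

lemma eqn_add4: "eqn n a1 b1 \<Longrightarrow> eqn n a2 b2 \<Longrightarrow> eqn n a3 b3 \<Longrightarrow> eqn n a4 b4 \<Longrightarrow>
  eqn n (\<lambda>i. a1 i + a2 i + a3 i + a4 i) (\<lambda>i. b1 i + b2 i + b3 i + b4 i)"
  by (simp add: eqn_def)

lemma LM_comb: "eqn n (LM n M c (\<lambda>i. k1 * xr x i + k2 * xs x i + k3 * x2 x i + k4 * xm x i))
   (\<lambda>i. k1 * (r - c) * xr x i + k2 * (s - c) * xs x i + k3 * (2 - c) * x2 x i + k4 * (-1 - c) * xm x i)"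
proof -
  have "LM n M c (\<lambda>i. k1 * xr x i + k2 * xs x i + k3 * x2 x i + k4 * xm x i) =
     (\<lambda>i. k1 * LM n M c (xr x) i + k2 * LM n M c (xs x) i + k3 * LM n M c (x2 x) i + k4 * LM n M c (xm x) i)"
    by (simp only: LM_add LM_scale)
  moreover have "eqn n \<dots> (\<lambda>i. k1 * (r - c) * xr x i + k2 * (s - c) * xs x i + k3 * (2 - c) * x2 x i + k4 * (-1 - c) * xm x i)"
    using eig_LM[OF eig_r[of x], where c=c] eig_LM[OF eig_s[of x], where c=c] eig_LM[OF eig_2[of x], where c=c] eig_LM[OF eig_m[of x], where c=c]
    by (simp add: eqn_def)
  ultimately show ?thesis by simp
qed

lemma LM_x: "eqn n (LM n M c x)
   (\<lambda>i. (r - c) * xr x i + (s - c) * xs x i + (2 - c) * x2 x i + (-1 - c) * xm x i)"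
proof -
  have "eqn n (LM n M c x) (LM n M c (\<lambda>i. 1 * xr x i + 1 * xs x i + 1 * x2 x i + 1 * xm x i))"
    using LM_cong[OF dx, of M c] by simp
  from eqn_trans[OF this LM_comb] show ?thesis by simp
qed

lemma four_x: assumes "eqn n z (\<lambda>i. c1 * xr x i + c2 * xs x i + c3 * x2 x i + c4 * xm x i)"
  shows "dot n x z = c1 * dot n (xr x) (xr x) + c2 * dot n (xs x) (xs x) + c3 * dot n (x2 x) (x2 x) + c4 * dot n (xm x) (xm x)"
proof -
  have "dot n x z = dot n (\<lambda>i. xr x i + xs x i + x2 x i + xm x i) z"
    by (rule dot_cong[OF dx eqn_refl])
  also have "\<dots> = c1 * dot n (xr x) (xr x) + c2 * dot n (xs x) (xs x) + c3 * dot n (x2 x) (x2 x) + c4 * dot n (xm x) (xm x)"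
    by (rule four[OF eig_r eig_s eig_2 eig_m _ _ _ _ _ _ assms]) (use r2 sm in auto)
  finally show ?thesis .
qed

lemma psd: "dot n x (LM n M 2 (LM n M (-1) x)) \<ge> 0"
proof -
  have "eqn n (LM n M 2 (LM n M (-1) x)) (LM n M 2 (\<lambda>i. (r + 1) * xr x i + (s + 1) * xs x i + 3 * x2 x i + 0 * xm x i))"
    using LM_cong[OF LM_x[of "-1" x], of M 2] by simp
  from eqn_trans[OF this LM_comb]
  have "dot n x (LM n M 2 (LM n M (-1) x)) = (r+1)*(r-2) * dot n (xr x) (xr x) + (s+1)*(s-2) * dot n (xs x) (xs x)
     + 0 * dot n (x2 x) (x2 x) + 0 * dot n (xm x) (xm x)"
    by (intro four_x) simp
  moreover have "(r+1)*(r-2) \<ge> 0" "(s+1)*(s-2) \<ge> 0" using r2 sm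
    by (simp_all add: mult_nonneg_nonneg mult_nonpos_nonpos)
  ultimately show ?thesis using dot_self_nonneg
    by (simp add: mult_nonneg_nonneg add_nonneg_nonneg)
qed

lemma posdir: "dot n x (LM n M 2 x) \<le> (r - 2) * dot n (xr x) (xr x)"
proof -
  have "dot n x (LM n M 2 x) = (r-2) * dot n (xr x) (xr x) + (s-2) * dot n (xs x) (xs x)
     + (2-2) * dot n (x2 x) (x2 x) + (-1-2) * dot n (xm x) (xm x)"
    by (intro four_x LM_x)
  moreover have "(s-2) * dot n (xs x) (xs x) \<le> 0" "(-1-2) * dot n (xm x) (xm x) \<le> 0"
    using sm dot_self_nonneg[of n "xs x"] dot_self_nonneg[of n "xm x"]
    by (simp_all add: mult_nonpos_nonneg)
  ultimately show ?thesis by simp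
qed

end

lemma quad_disc:
  fixes \<alpha> \<beta> \<gamma> :: real
  assumes a: "\<alpha> \<ge> 0" and q: "\<And>t. 0 \<le> t*t*\<alpha> + 2*t*\<beta> + \<gamma>"
  shows "\<beta>^2 \<le> \<alpha> * \<gamma>"
proof (cases "\<alpha> = 0")
  case True
  show ?thesis
  proof (cases "\<beta> = 0")
    case False
    have "0 \<le> (-(\<gamma>+1)/(2*\<beta>))*(-(\<gamma>+1)/(2*\<beta>))*\<alpha> + 2*(-(\<gamma>+1)/(2*\<beta>))*\<beta> + \<gamma>" by (rule q)
    also have "\<dots> = -1" using True False by (simp add: field_simps)
    finally show ?thesis by simp
  qed (use True in simp)
next
  case False
  then have ap: "\<alpha> > 0" using a by simp
  have "0 \<le> (-\<beta>/\<alpha>)*(-\<beta>/\<alpha>)*\<alpha> + 2*(-\<beta>/\<alpha>)*\<beta> + \<gamma>" by (rule q)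
  also have "\<dots> = (\<alpha>*\<gamma> - \<beta>^2) / \<alpha>" using ap by (simp add: field_simps power2_eq_square)
  finally have "0 \<le> (\<alpha>*\<gamma> - \<beta>^2) / \<alpha>" .
  then show ?thesis using ap by (simp add: zero_le_divide_iff)
qed

definition ev :: "nat \<Rightarrow> nat \<Rightarrow> real" where "ev w = (\<lambda>i. if i = w then 1 else 0)"

definition cn :: "nat \<Rightarrow> (nat \<Rightarrow> nat \<Rightarrow> bool) \<Rightarrow> nat \<Rightarrow> nat \<Rightarrow> nat" where
  "cn n E v w = card {j. j < n \<and> E v j \<and> E j w}"

lemma sum_ind_card: "(\<Sum>j<(n::nat). if P j then 1 else (0::real)) = real (card {j. j < n \<and> P j})"
proof -
  have "(\<Sum>j<n. if P j then 1 else (0::real)) = (\<Sum>j\<in>{j\<in>{..<n}. P j}. (1::real))"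
    by (subst sum.inter_filter) auto
  also have "\<dots> = real (card {j\<in>{..<n}. P j})" by simp
  also have "{j\<in>{..<n}. P j} = {j. j < n \<and> P j}" by auto
  finally show ?thesis .
qed

locale gr = spec n "adj_matrix n E" r s for n E r s +
  assumes sg: "simple_graph n E"
  and uniq: "\<And>u w. eig n (adj_matrix n E) u r \<Longrightarrow> eig n (adj_matrix n E) w r \<Longrightarrow>
      \<not> eqn n u (\<lambda>_. 0) \<Longrightarrow> \<exists>c. eqn n w (\<lambda>i. c * u i)"
  and ex: "\<exists>u. eig n (adj_matrix n E) u r \<and> \<not> eqn n u (\<lambda>_. 0)"
begin

abbreviation "AA \<equiv> adj_matrix n E"
abbreviation "Nf x \<equiv> LM n AA 2 (LM n AA (-1) x)"

lemma aij: "i < n \<Longrightarrow> j < n \<Longrightarrow> AA $$ (i,j) = (if E i j then 1 else 0)"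
  by (simp add: adj_matrix_def)
lemma Esym: "i < n \<Longrightarrow> j < n \<Longrightarrow> E i j \<longleftrightarrow> E j i"
  using sg by (simp add: simple_graph_def)
lemma Eirr: "i < n \<Longrightarrow> \<not> E i i"
  using sg by (simp add: simple_graph_def)

lemma deg_sum: "real (degree n E v) = (\<Sum>j<n. if E v j then 1 else 0)"
  by (simp add: degree_def sum_ind_card)

lemma mvM_ev: "w < n \<Longrightarrow> i < n \<Longrightarrow> mvM n AA (ev w) i = (if E i w then 1 else 0)"
  by (simp add: mvM_def ev_def aij if_distrib cong: if_cong)

lemma mvM2_ev: "w < n \<Longrightarrow> v < n \<Longrightarrow> mvM n AA (mvM n AA (ev w)) v = real (cn n E v w)"
proof -
  assume w: "w < n" and v: "v < n"
  have "mvM n AA (mvM n AA (ev w)) v = (\<Sum>j<n. AA $$ (v,j) * mvM n AA (ev w) j)"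
    by (simp add: mvM_def)
  also have "\<dots> = (\<Sum>j<n. if E v j \<and> E j w then 1 else 0)"
    by (intro sum.cong refl) (simp add: aij mvM_ev v w)
  also have "\<dots> = real (cn n E v w)" by (simp add: sum_ind_card cn_def)
  finally show ?thesis .
qed

lemma Nf_e: "v < n \<Longrightarrow> w < n \<Longrightarrow>
   Nf (ev w) v = real (cn n E v w) - (if E v w then 1 else 0) - (if v = w then 2 else 0)"
  unfolding LM_expand2 by (simp add: mvM2_ev mvM_ev) (simp add: ev_def)

lemma cn_sym: "v < n \<Longrightarrow> w < n \<Longrightarrow> cn n E v w = cn n E w v"
  unfolding cn_def by (rule arg_cong[where f=card]) (auto simp: Esym)

lemma Nf_sym: "v < n \<Longrightarrow> w < n \<Longrightarrow> Nf (ev w) v = Nf (ev v) w"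
  by (simp add: Nf_e cn_sym Esym)

lemma Nf_expand: assumes v: "v < n" shows "Nf x v = (\<Sum>w<n. x w * Nf (ev w) v)"
proof -
  have "Nf x v = mvM n AA (mvM n AA x) v - mvM n AA x v - 2 * x v"
    unfolding LM_expand2 by simp
  also have "mvM n AA (mvM n AA x) v = (\<Sum>w<n. x w * mvM n AA (mvM n AA (ev w)) v)"
  proof -
    have "mvM n AA (mvM n AA x) v = (\<Sum>j<n. \<Sum>w<n. AA $$ (v,j) * AA $$ (j,w) * x w)"
      by (simp add: mvM_def sum_distrib_left mult.assoc)
    also have "\<dots> = (\<Sum>w<n. \<Sum>j<n. AA $$ (v,j) * AA $$ (j,w) * x w)" by (rule sum.swap)
    also have "\<dots> = (\<Sum>w<n. x w * mvM n AA (mvM n AA (ev w)) v)"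
    proof (intro sum.cong refl)
      fix w assume w: "w \<in> {..<n}"
      have "mvM n AA (ev w) = (\<lambda>j. AA $$ (j,w))"
        using w by (auto simp: mvM_def ev_def if_distrib cong: if_cong)
      then show "(\<Sum>j<n. AA $$ (v,j) * AA $$ (j,w) * x w) = x w * mvM n AA (mvM n AA (ev w)) v"
        by (simp add: mvM_def sum_distrib_left sum_distrib_right mult_ac)
    qed
    finally show ?thesis .
  qed
  also have "mvM n AA x v = (\<Sum>w<n. x w * mvM n AA (ev w) v)"
  proof -
    have "mvM n AA x v = (\<Sum>w<n. AA$$(v,w) * x w)" by (simp add: mvM_def)
    also have "\<dots> = (\<Sum>w<n. x w * mvM n AA (ev w) v)"
      by (intro sum.cong refl) (simp add: mvM_ev aij v)
    finally show ?thesis .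
  qed
  also have "x v = (\<Sum>w<n. x w * ev w v)"
    using v by (simp add: ev_def if_distrib cong: if_cong)
  finally have "Nf x v = (\<Sum>w<n. x w * mvM n AA (mvM n AA (ev w)) v) - (\<Sum>w<n. x w * mvM n AA (ev w) v) - 2 * (\<Sum>w<n. x w * ev w v)" .
  also have "\<dots> = (\<Sum>w<n. x w * (mvM n AA (mvM n AA (ev w)) v - mvM n AA (ev w) v - 2 * ev w v))"
    by (simp add: algebra_simps sum_subtractf sum_distrib_left)
  also have "\<dots> = (\<Sum>w<n. x w * Nf (ev w) v)"
    unfolding LM_expand2 by simp
  finally show ?thesis .
qed

lemma cn_deg: "u < n \<Longrightarrow> cn n E u u = degree n E u"
  unfolding cn_def degree_def by (rule arg_cong[where f=card]) (auto simp: Esym)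

lemma Nf_diag: "u < n \<Longrightarrow> Nf (ev u) u = real (degree n E u) - 2"
  by (simp add: Nf_e cn_deg Eirr)

lemma dot_ev1: "u < n \<Longrightarrow> dot n (ev u) y = y u"
proof -
  assume u: "u < n"
  have "dot n (ev u) y = (\<Sum>i<n. if i = u then y u else 0)"
    unfolding dot_def ev_def by (rule sum.cong) auto
  then show ?thesis using u by simp
qed

lemma dot_ev2: "u < n \<Longrightarrow> v < n \<Longrightarrow> dot n (\<lambda>i. t * ev u i + ev v i) y = t * y u + y v"
  by (simp add: dot_add_left dot_scale_left dot_ev1)

lemma deg_ge2: "u < n \<Longrightarrow> degree n E u \<ge> 2"
proof -
  assume u: "u < n"
  have "0 \<le> dot n (ev u) (Nf (ev u))" by (rule psd)
  then have "0 \<le> real (degree n E u) - 2" using u by (simp add: dot_ev1 Nf_diag)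
  then show ?thesis by simp
qed

lemma psd2: assumes u: "u < n" and v: "v < n" and uv: "u \<noteq> v"
  shows "(Nf (ev v) u)^2 \<le> (real (degree n E u) - 2) * (real (degree n E v) - 2)"
proof -
  have "(Nf (ev v) u)^2 \<le> Nf (ev u) u * Nf (ev v) v"
  proof (rule quad_disc)
    show "0 \<le> Nf (ev u) u" using deg_ge2[OF u] u by (simp add: Nf_diag)
    fix t
    have "Nf (\<lambda>i. t * ev u i + ev v i) = (\<lambda>i. t * Nf (ev u) i + Nf (ev v) i)"
      by (simp only: LM_add LM_scale)
    moreover have "0 \<le> dot n (\<lambda>i. t * ev u i + ev v i) (Nf (\<lambda>i. t * ev u i + ev v i))" by (rule psd)
    ultimately have "0 \<le> t * (t * Nf (ev u) u + Nf (ev v) u) + (t * Nf (ev u) v + Nf (ev v) v)"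
      using u v uv by (simp add: dot_ev2)
    also have "Nf (ev u) v = Nf (ev v) u" using u v by (rule Nf_sym[symmetric])
    finally show "0 \<le> t * t * Nf (ev u) u + 2 * t * Nf (ev v) u + Nf (ev v) v"
      by (simp add: algebra_simps)
  qed
  then show ?thesis using u v by (simp add: Nf_diag)
qed

lemma row0: assumes u: "u < n" and v: "v < n" and uv: "u \<noteq> v" and d: "degree n E u = 2"
  shows "cn n E u v = (if E u v then 1 else 0)"
proof -
  have "(Nf (ev v) u)^2 \<le> 0" using psd2[OF u v uv] d by simp
  then have "(Nf (ev v) u)^2 = 0" using zero_le_power2[of "Nf (ev v) u"] by linarith
  then have "Nf (ev v) u = 0" by simp
  then show ?thesis using u v uv by (simp add: Nf_e split: if_splits)
qed

lemma part2: assumes u: "u < n" and v: "v < n" and uv: "u \<noteq> v" and nE: "\<not> E u v"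
  and sub: "\<forall>w<n. E u w \<longrightarrow> E v w"
  shows "int (degree n E v) - int (degree n E u) \<ge> 5"
proof -
  have "cn n E u v = degree n E u"
    unfolding cn_def degree_def
    by (rule arg_cong[where f=card]) (use sub v Esym in blast)
  then have "Nf (ev v) u = real (degree n E u)" using u v uv nE by (simp add: Nf_e)
  with psd2[OF u v uv] have key: "(real (degree n E u))^2 \<le> (real (degree n E u) - 2) * (real (degree n E v) - 2)"
    by simp
  have d2: "real (degree n E u) \<ge> 2" using deg_ge2[OF u] by simp
  show ?thesis
  proof (rule ccontr)
    assume "\<not> ?thesis"
    then have "real (degree n E v) \<le> real (degree n E u) + 4" by linarith
    then have "(real (degree n E u) - 2) * (real (degree n E v) - 2) \<le> (real (degree n E u) - 2) * (real (degree n E u) + 2)"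
      using d2 by (intro mult_left_mono) auto
    also have "\<dots> = (real (degree n E u))^2 - 4" by (simp add: algebra_simps power2_eq_square)
    finally show False using key by linarith
  qed
qed

end

context gr begin

abbreviation "RR \<equiv> (\<lambda>u v. u < n \<and> v < n \<and> E u v)"

lemma reach_sym: "reach n E u v \<Longrightarrow> reach n E v u"
  unfolding reach_def
proof (induct rule: rtranclp_induct)
  case base then show ?case by simp
next
  case (step y z)
  then have "RR z y" using Esym by blast
  then show ?case using step(3) by (rule converse_rtranclp_into_rtranclp)
qed

lemma comp_eq: "w \<in> component n E v \<Longrightarrow> component n E w = component n E v"
  unfolding component_def using reach_sym unfolding reach_def
  by (auto intro: rtranclp_trans)

lemma comp_self: "v < n \<Longrightarrow> v \<in> component n E v"
  by (simp add: component_def reach_def)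

lemma comp_closed: "w \<in> component n E v \<Longrightarrow> j < n \<Longrightarrow> E w j \<Longrightarrow> j \<in> component n E v"
  unfolding component_def reach_def by (auto intro: rtranclp.rtrancl_into_rtrancl)

lemma comp_lt: "w \<in> component n E v \<Longrightarrow> w < n"
  by (simp add: component_def)

lemma comp_min: assumes "v \<in> S" and cl: "\<And>w j. w \<in> S \<Longrightarrow> j < n \<Longrightarrow> E w j \<Longrightarrow> j \<in> S"
  shows "component n E v \<subseteq> S"
proof
  fix x assume "x \<in> component n E v"
  then have "RR\<^sup>*\<^sup>* v x" by (simp add: component_def reach_def)
  then show "x \<in> S"
  proof (induct rule: rtranclp_induct)
    case base then show ?case using assms(1) .
  next
    case (step y z) then show ?case using cl by blast
  qed
qed

lemma comp_disj: "component n E v \<noteq> component n E w \<Longrightarrow> x \<in> component n E v \<Longrightarrow> x \<notin> component n E w"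
  using comp_eq by metis

lemma K3: assumes v: "v < n" and d: "degree n E v = 2"
  shows "is_K3 E (component n E v) \<and> (\<forall>z\<in>component n E v. degree n E z = 2)"
proof -
  have fin: "finite {w. w < n \<and> E v w}" by simp
  from d obtain x y where xy: "{w. w < n \<and> E v w} = {x, y}" "x \<noteq> y"
    unfolding degree_def by (auto simp: card_2_iff)
  have x: "x < n" "E v x" and y: "y < n" "E v y" using xy(1) by blast+
  have xv: "x \<noteq> v" "y \<noteq> v" using x y Eirr v by auto
  have nb: "w \<in> {x,y}" if "w < n" "E v w" for w using xy(1) that by blast
  have cl2: "z = v \<or> z = x \<or> z = y" if p: "p \<in> {x,y}" and z: "z < n" "E p z" for p z
  proof (rule ccontr)
    assume nz: "\<not> (z = v \<or> z = x \<or> z = y)"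
    have "cn n E v z = (if E v z then 1 else 0)" by (rule row0[OF v z(1)]) (use nz d in auto)
    moreover have "\<not> E v z" using nb[OF z(1)] nz by auto
    moreover have "p \<in> {j. j < n \<and> E v j \<and> E j z}" using p x y z by auto
    then have "cn n E v z \<noteq> 0" unfolding cn_def by (auto simp: card_eq_0_iff)
    ultimately show False by simp
  qed
  have Eyx: "E y x"
  proof -
    have "cn n E v x = 1" using row0[OF v x(1)] xv x d by auto
    then have "{j. j < n \<and> E v j \<and> E j x} \<noteq> {}" unfolding cn_def by (metis card.empty zero_neq_one)
    then obtain j where j: "j < n" "E v j" "E j x" by auto
    then have "j \<in> {x,y}" using nb by auto
    then show ?thesis using j Eirr x by auto
  qed
  then have Exy: "E x y" using Esym x y by auto
  have Exv: "E x v" "E y v" using Esym x y v by auto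
  define S where "S = {v, x, y}"
  have clS: "j \<in> S" if ws: "w \<in> S" "j < n" "E w j" for w j
  proof -
    consider "w = v" | "w \<in> {x,y}" using ws(1) S_def by auto
    then show ?thesis
    proof cases
      case 1 then show ?thesis using nb ws S_def by auto
    next
      case 2 then show ?thesis using cl2[OF 2 ws(2,3)] S_def by auto
    qed
  qed
  have c1: "component n E v \<subseteq> S" by (rule comp_min) (use S_def clS in auto)
  have c2: "S \<subseteq> component n E v"
    using comp_self[OF v] comp_closed[OF comp_self[OF v] x(1) x(2)] comp_closed[OF comp_self[OF v] y(1) y(2)]
    S_def by auto
  have C: "component n E v = {v, x, y}" using c1 c2 S_def by auto
  have K: "is_K3 E (component n E v)"
    unfolding is_K3_def C using xy(2) xv x y Eyx Exy Exv by auto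
  have dx: "degree n E x = 2"
  proof -
    have "{w. w < n \<and> E x w} = {v, y}"
      using cl2[of x] Exv Exy v y Eirr x by auto
    then show ?thesis unfolding degree_def using xv by simp
  qed
  have dy: "degree n E y = 2"
  proof -
    have "{w. w < n \<and> E y w} = {v, x}"
      using cl2[of y] Exv Eyx v x Eirr y by auto
    then show ?thesis unfolding degree_def using xv by simp
  qed
  show ?thesis using K C d dx dy by auto
qed

lemma supp_LM: assumes H: "H = component n E v0"
  and x: "\<forall>i<n. i \<notin> H \<longrightarrow> x i = 0"
  shows "\<forall>i<n. i \<notin> H \<longrightarrow> LM n AA c x i = 0"
proof (intro allI impI)
  fix i assume i: "i < n" "i \<notin> H"
  have "mvM n AA x i = (\<Sum>j<n. 0)"
    unfolding mvM_def
  proof (intro sum.cong refl)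
    fix j assume j: "j \<in> {..<n}"
    show "AA $$ (i, j) * x j = 0"
    proof (cases "j \<in> H")
      case True
      have "\<not> E i j"
      proof
        assume "E i j"
        then have "E j i" using Esym i j by auto
        then have "i \<in> H" using comp_closed True i H by blast
        then show False using i by simp
      qed
      then show ?thesis using i j by (simp add: aij)
    next
      case False then show ?thesis using x j by simp
    qed
  qed
  then show "LM n AA c x i = 0" using x i by (simp add: LM_def)
qed

lemma indicator: assumes H: "H = component n E v0" and v0: "v0 < n"
  and dg: "\<forall>w\<in>H. degree n E w \<ge> 3"
  shows "\<exists>u. eig n AA u r \<and> \<not> eqn n u (\<lambda>_. 0) \<and> (\<forall>i<n. i \<notin> H \<longrightarrow> u i = 0)"
proof -
  define h where "h = (\<lambda>i. if i \<in> H then 1 else (0::real))"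
  have hs: "\<forall>i<n. i \<notin> H \<longrightarrow> h i = 0" by (simp add: h_def)
  have sup: "\<forall>i<n. i \<notin> H \<longrightarrow> xr h i = 0"
    using supp_LM[OF H supp_LM[OF H supp_LM[OF H hs]]] by (simp add: proj_def)
  have mh: "mvM n AA h i = real (degree n E i)" if i: "i \<in> H" for i
  proof -
    have il: "i < n" using i H comp_lt by auto
    have "mvM n AA h i = (\<Sum>j<n. if E i j then 1 else 0)"
      unfolding mvM_def
    proof (intro sum.cong refl)
      fix j assume j: "j \<in> {..<n}"
      show "AA $$ (i, j) * h j = (if E i j then 1 else 0)"
        using comp_closed[of i v0 j] i j il H by (auto simp: aij h_def)
    qed
    then show ?thesis by (simp add: deg_sum)
  qed
  have "dot n h (LM n AA 2 h) = (\<Sum>i<n. h i * (mvM n AA h i - 2 * h i))"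
    by (simp add: dot_def LM_def)
  also have "\<dots> \<ge> (\<Sum>i<n. h i)"
  proof (intro sum_mono)
    fix i assume "i \<in> {..<n}"
    show "h i \<le> h i * (mvM n AA h i - 2 * h i)"
    proof (cases "i \<in> H")
      case True
      then show ?thesis using mh[OF True] dg by (auto simp: h_def)
    qed (simp add: h_def)
  qed
  moreover have "(\<Sum>i<n. h i) \<ge> h v0"
    by (rule member_le_sum) (use v0 in \<open>auto simp: h_def\<close>)
  moreover have "h v0 = 1" using comp_self[OF v0] H by (simp add: h_def)
  ultimately have "dot n h (LM n AA 2 h) > 0" by linarith
  with posdir[of h] have "dot n (xr h) (xr h) \<noteq> 0" using r2
    by (auto simp: mult_le_0_iff)
  then have "\<not> eqn n (xr h) (\<lambda>_. 0)"
    using dot_cong[of n "xr h" "\<lambda>_. 0" "xr h" "\<lambda>_. 0"] by (auto simp: dot_def)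
  then show ?thesis using eig_r sup by blast
qed

lemma unique_big: assumes v1: "v1 < n" and v2: "v2 < n"
  and ne: "component n E v1 \<noteq> component n E v2"
  and d1: "\<forall>w\<in>component n E v1. degree n E w \<ge> 3"
  and d2: "\<forall>w\<in>component n E v2. degree n E w \<ge> 3"
  shows False
proof -
  obtain u1 where u1: "eig n AA u1 r" "\<not> eqn n u1 (\<lambda>_. 0)" "\<forall>i<n. i \<notin> component n E v1 \<longrightarrow> u1 i = 0"
    using indicator[OF refl v1 d1] by blast
  obtain u2 where u2: "eig n AA u2 r" "\<not> eqn n u2 (\<lambda>_. 0)" "\<forall>i<n. i \<notin> component n E v2 \<longrightarrow> u2 i = 0"
    using indicator[OF refl v2 d2] by blast
  obtain c where c: "eqn n u2 (\<lambda>i. c * u1 i)" using uniq[OF u1(1) u2(1) u1(2)] by blast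
  obtain i where i: "i < n" "u2 i \<noteq> 0" using u2(2) by (auto simp: eqn_def)
  then have "i \<in> component n E v2" using u2(3) by auto
  then have "i \<notin> component n E v1" using comp_disj[OF ne[symmetric]] by auto
  then have "u1 i = 0" using u1(3) i by auto
  then show False using c i by (simp add: eqn_def)
qed

lemma exists_big: "\<exists>v<n. degree n E v \<ge> 3"
proof (rule ccontr)
  assume "\<not> ?thesis"
  then have d2: "\<And>v. v < n \<Longrightarrow> degree n E v = 2" using deg_ge2 by force
  have N0: "Nf (ev w) v = 0" if "v < n" "w < n" for v w
  proof (cases "v = w")
    case True then show ?thesis using that d2 by (simp add: Nf_diag)
  next
    case False then show ?thesis using row0[OF that False d2[OF that(1)]] that by (simp add: Nf_e)
  qed
  obtain u where u: "eig n AA u r" "\<not> eqn n u (\<lambda>_. 0)" using ex by blast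
  have "eqn n (Nf u) (\<lambda>i. (r + 1) * (r - 2) * u i)"
  proof -
    have "eqn n (Nf u) (LM n AA 2 (\<lambda>i. (r + 1) * u i))"
      using LM_cong[OF eig_LM[OF u(1), where c="-1"], where c=2] by simp
    also have "LM n AA 2 (\<lambda>i. (r + 1) * u i) = (\<lambda>i. (r + 1) * LM n AA 2 u i)" by (rule LM_scale)
    finally have h1: "eqn n (Nf u) (\<lambda>i. (r + 1) * LM n AA 2 u i)" .
    have "eqn n (\<lambda>i. (r + 1) * LM n AA 2 u i) (\<lambda>i. (r + 1) * ((r - 2) * u i))"
      using eig_LM[OF u(1), where c=2] by (simp add: eqn_def)
    with h1 show ?thesis by (simp add: eqn_def)
  qed
  moreover have "Nf u i = 0" if "i < n" for i
    using Nf_expand[OF that, of u] N0[OF that] by simp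
  ultimately have "eqn n u (\<lambda>_. 0)" using r2 by (auto simp: eqn_def)
  then show False using u(2) by simp
qed

lemma part1: "\<exists>C\<in>components n E. (\<forall>v\<in>C. degree n E v \<ge> 3)
            \<and> (\<forall>D\<in>components n E. D \<noteq> C \<longrightarrow> is_K3 E D)"
proof -
  obtain v0 where v0: "v0 < n" "degree n E v0 \<ge> 3" using exists_big by blast
  define C where "C = component n E v0"
  have Cc: "C \<in> components n E" using v0 by (simp add: C_def components_def)
  have allC: "\<forall>v\<in>C. degree n E v \<ge> 3"
  proof
    fix v assume v: "v \<in> C"
    then have vl: "v < n" using comp_lt C_def by auto
    show "degree n E v \<ge> 3"
    proof (rule ccontr)
      assume "\<not> ?thesis"
      then have "degree n E v = 2" using deg_ge2[OF vl] by simp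
      from K3[OF vl this] have "\<forall>z\<in>component n E v. degree n E z = 2" by blast
      moreover have "component n E v = C" using comp_eq v C_def by auto
      moreover have "v0 \<in> C" using comp_self[OF v0(1)] C_def by simp
      ultimately show False using v0 by auto
    qed
  qed
  have "\<forall>D\<in>components n E. D \<noteq> C \<longrightarrow> is_K3 E D"
  proof (intro ballI impI)
    fix D assume D: "D \<in> components n E" "D \<noteq> C"
    from D(1) obtain w where w: "w < n" "D = component n E w" by (auto simp: components_def)
    show "is_K3 E D"
    proof (cases "\<exists>z\<in>D. degree n E z = 2")
      case True
      then obtain z where z: "z \<in> D" "degree n E z = 2" by blast
      have zl: "z < n" using z w comp_lt by auto
      have "component n E z = D" using comp_eq z w by auto
      then show ?thesis using K3[OF zl z(2)] by simp
    next
      case False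
      have "\<forall>z\<in>D. degree n E z \<ge> 3"
      proof
        fix z assume "z \<in> D"
        then show "degree n E z \<ge> 3" using False deg_ge2[of z] comp_lt w by fastforce
      qed
      then have False using unique_big[OF v0(1) w(1)] D(2) allC w C_def by auto
      then show ?thesis ..
    qed
  qed
  then show ?thesis using Cc allC by blast
qed

end

lemma eig_iff: "eig n M y l \<longleftrightarrow> eqn n (mvM n M y) (\<lambda>i. l * y i)"
  by (auto simp: eig_def eqn_def LM_def)

context simw begin

lemma Beig: assumes "eig n A u r"
  shows "eqn n (mvM n B (mvM n Q u)) (\<lambda>i. r * mvM n Q u i)"
proof -
  have "mvM n Q (mvM n A u) = mvM n Q (mvM n P (mvM n B (mvM n Q u)))"
    by (rule mvM_cong[OF A_v])
  moreover have "eqn n (mvM n Q (mvM n P (mvM n B (mvM n Q u)))) (mvM n B (mvM n Q u))"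
    by (rule QP_v)
  moreover have "mvM n Q (mvM n A u) = mvM n Q (\<lambda>i. r * u i)"
    using assms by (intro mvM_cong) (simp add: eig_iff)
  moreover have "mvM n Q (\<lambda>i. r * u i) = (\<lambda>i. r * mvM n Q u i)" by (rule mvM_scale)
  ultimately show ?thesis by (metis eqn_sym)
qed

lemma uniq_simw: assumes ut: "upper_triangular B" and dd: "\<And>k. 0 < k \<Longrightarrow> k < n \<Longrightarrow> B $$ (k,k) \<noteq> r"
  and u: "eig n A u r" and w: "eig n A w r" and nz: "\<not> eqn n u (\<lambda>_. 0)"
  shows "\<exists>c. eqn n w (\<lambda>i. c * u i)"
proof -
  define \<alpha> where "\<alpha> = mvM n Q u 0"
  define \<beta> where "\<beta> = mvM n Q w 0"
  have a0: "\<alpha> \<noteq> 0"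
  proof
    assume "\<alpha> = 0"
    have "eqn n (mvM n Q u) (\<lambda>_. 0)"
      apply (rule tri_eig_unique[OF carr(2) ut])
        apply (rule dd; assumption)
       apply (rule Beig[OF u])
      using \<open>\<alpha> = 0\<close> \<alpha>_def by simp
    then have "mvM n P (mvM n Q u) = (\<lambda>_. 0)" by (rule mvM_zero)
    then show False using PQ_v[of u] nz by (simp add: eqn_def)
  qed
  define z where "z = (\<lambda>i. \<alpha> * mvM n Q w i - \<beta> * mvM n Q u i)"
  have "mvM n B z = (\<lambda>i. \<alpha> * mvM n B (mvM n Q w) i - \<beta> * mvM n B (mvM n Q u) i)"
    unfolding z_def by (simp add: mvM_diff mvM_scale)
  then have "eqn n (mvM n B z) (\<lambda>i. r * z i)"
    using Beig[OF u] Beig[OF w] by (simp add: eqn_def z_def algebra_simps)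
  moreover have "z 0 = 0" by (simp add: z_def \<alpha>_def \<beta>_def)
  ultimately have "eqn n z (\<lambda>_. 0)"
    apply -
    apply (rule tri_eig_unique[OF carr(2) ut])
      apply (rule dd; assumption)
     apply assumption
    apply assumption
    done
  then have "mvM n P z = (\<lambda>_. 0)" by (rule mvM_zero)
  moreover have "mvM n P z = (\<lambda>i. \<alpha> * mvM n P (mvM n Q w) i - \<beta> * mvM n P (mvM n Q u) i)"
    unfolding z_def by (simp add: mvM_diff mvM_scale)
  ultimately have h: "\<alpha> * mvM n P (mvM n Q w) i - \<beta> * mvM n P (mvM n Q u) i = 0" for i
    by (metis (mono_tags))
  have "\<forall>i<n. \<alpha> * w i - \<beta> * u i = 0"
  proof (intro allI impI)
    fix i assume i: "i < n"
    have "mvM n P (mvM n Q u) i = u i" "mvM n P (mvM n Q w) i = w i"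
      using PQ_v[of u] PQ_v[of w] i by (auto simp: eqn_def)
    then show "\<alpha> * w i - \<beta> * u i = 0" using h[of i] by simp
  qed
  then have "eqn n w (\<lambda>i. (\<beta> / \<alpha>) * u i)"
    using a0 by (auto simp: eqn_def field_simps)
  then show ?thesis by blast
qed

lemma ex_simw: assumes ut: "upper_triangular B" and B0: "B $$ (0,0) = r" and n0: "0 < n"
  shows "\<exists>u. eig n A u r \<and> \<not> eqn n u (\<lambda>_. 0)"
proof -
  define e0 where "e0 = (\<lambda>i::nat. if i = 0 then 1 else (0::real))"
  have be: "eqn n (mvM n B e0) (\<lambda>i. r * e0 i)"
    using tri_eig0[OF carr(2) ut] B0 by (simp add: e0_def)
  define u where "u = mvM n P e0"
  have "eqn n (mvM n A u) (mvM n P (mvM n B (mvM n Q u)))" by (rule A_v)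
  moreover have "mvM n B (mvM n Q u) = mvM n B e0"
    unfolding u_def by (intro mvM_cong QP_v)
  moreover have "mvM n P (mvM n B e0) = mvM n P (\<lambda>i. r * e0 i)"
    by (intro mvM_cong be)
  moreover have "mvM n P (\<lambda>i. r * e0 i) = (\<lambda>i. r * u i)"
    unfolding u_def by (rule mvM_scale)
  ultimately have "eig n A u r" by (simp add: eig_iff)
  moreover have "\<not> eqn n u (\<lambda>_. 0)"
  proof
    assume "eqn n u (\<lambda>_. 0)"
    then have "mvM n Q u = (\<lambda>_. 0)" by (rule mvM_zero)
    then show False using QP_v[of e0] n0 unfolding u_def by (auto simp: eqn_def e0_def)
  qed
  ultimately show ?thesis by blast
qed

end

theorem lemma2p5:
  fixes n :: nat and E :: "nat \<Rightarrow> nat \<Rightarrow> bool" and r s :: real and a b :: nat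
  assumes "simple_graph n E"
    and "char_poly (adj_matrix n E) = [:-r, 1:] * [:-s, 1:] * [:-2, 1:] ^ a * [:1, 1:] ^ b"
    and "r > 2" and "s < -1"
  shows "(\<exists>C\<in>components n E. (\<forall>v\<in>C. degree n E v \<ge> 3)
            \<and> (\<forall>D\<in>components n E. D \<noteq> C \<longrightarrow> is_K3 E D))
       \<and> (\<forall>u<n. \<forall>v<n. u \<noteq> v \<and> \<not> E u v \<and> (\<forall>w<n. E u w \<longrightarrow> E v w)
            \<longrightarrow> int (degree n E v) - int (degree n E u) \<ge> 5)"
proof -
  let ?A = "adj_matrix n E"
  have Ac: "?A \<in> carrier_mat n n" by (simp add: adj_matrix_def)
  define es where "es = [r, s] @ replicate a 2 @ replicate b (-1::real)"
  have cp: "char_poly ?A = (\<Prod>e\<leftarrow>es. [:- e, 1:])"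
    unfolding assms(2) es_def
    apply (simp only: map_append prod_list.append list.map map_replicate prod_list_replicate prod_list.Cons prod_list.Nil)
    apply (simp only: minus_minus mult_1_right mult.assoc)
    done
  obtain B P Q where sd: "schur_decomposition ?A es = (B,P,Q)"
    by (cases "schur_decomposition ?A es") auto
  from schur_decomposition[OF Ac cp sd]
  have sw: "similar_mat_wit ?A B P Q" and ut: "upper_triangular B" and dg: "diag_mat B = es" by auto
  interpret simw n ?A B P Q
    using sw Ac unfolding similar_mat_wit_def Let_def by unfold_locales auto
  have len: "length es = n" using dg carr(2) by (auto simp: diag_mat_def)
  have Bk: "B $$ (k,k) = es ! k" if "k < n" for k
    using dg that carr(2) by (auto simp: diag_mat_def)
  have B0: "B $$ (0,0) = r" using Bk[of 0] len by (simp add: es_def)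
  have dd: "B $$ (k,k) \<noteq> r" if kk: "0 < k" "k < n" for k
  proof -
    obtain k' where k': "k = Suc k'" using kk(1) by (cases k) auto
    have "es ! k = (s # replicate a 2 @ replicate b (-1)) ! k'" by (simp add: es_def k')
    moreover have "k' < length (s # replicate a 2 @ replicate b (-1::real))"
      using kk(2) len k' by (simp add: es_def)
    ultimately have "es ! k \<in> set (s # replicate a 2 @ replicate b (-1::real))"
      by (metis nth_mem)
    then have "es ! k \<in> {s, 2, -1}" by auto
    then show ?thesis using Bk[OF kk(2)] assms(3,4) by auto
  qed
  have CH: "eqn n (opl n ?A es x) (\<lambda>_. 0)" for x
  proof -
    have "eqn n (opl n B (take n (diag_mat B)) (mvM n Q x)) (\<lambda>_. 0)"
      by (rule tri_CH[OF carr(2) ut]) auto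
    then have "eqn n (opl n B es (mvM n Q x)) (\<lambda>_. 0)" using dg len by simp
    then have "mvM n P (opl n B es (mvM n Q x)) = (\<lambda>_. 0)" by (rule mvM_zero)
    then show ?thesis using opl_transfer[of es x] by simp
  qed
  interpret symm n ?A
    by unfold_locales (use assms(1) in \<open>auto simp: adj_matrix_def simple_graph_def\<close>)
  have Z: "eqn n (LM n ?A (-1) (LM n ?A 2 (LM n ?A r (LM n ?A s x)))) (\<lambda>_. 0)" for x
  proof -
    define y where "y = LM n ?A r (LM n ?A s ((LM n ?A (-1) ^^ b) x))"
    have "opl n ?A es x = opl n ?A [r, s] ((LM n ?A 2 ^^ a) ((LM n ?A (-1) ^^ b) x))"
      unfolding es_def by (simp only: opl_append opl_replicate)
    also have "\<dots> = LM n ?A r (LM n ?A s ((LM n ?A 2 ^^ a) ((LM n ?A (-1) ^^ b) x)))"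
      by (simp only: opl_def foldr_Cons foldr_Nil comp_def id_def)
    also have "\<dots> = (LM n ?A 2 ^^ a) y"
      unfolding y_def by (simp only: LM_pow_comm)
    finally have "opl n ?A es x = (LM n ?A 2 ^^ a) y" .
    then have "eqn n (LM n ?A 2 y) (\<lambda>_. 0)" using CH[of x] pow_reduce by metis
    moreover have "LM n ?A 2 y = (LM n ?A (-1) ^^ b) (LM n ?A 2 (LM n ?A r (LM n ?A s x)))"
      unfolding y_def by (simp only: LM_pow_comm)
    ultimately show ?thesis using pow_reduce by metis
  qed
  interpret spec n ?A r s
    by unfold_locales (use assms(3,4) Z in auto)
  have n0: "0 < n" using len by (simp add: es_def)
  interpret gr n E r s
    by unfold_locales (use assms(1) uniq_simw[OF ut dd] ex_simw[OF ut B0 n0] in auto)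
  show ?thesis using part1 part2 by blast
qed


end
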